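(* Let $X\subset\mathbb{R}^2$ be a finite set and let $w$ be a point in the interior of $\mathrm{conv}(X)$ which lies on a vertex or an edge of the farthest point Voronoi diagram of $X$. Then there exists a finite collection of points $X'$ such that $\mathrm{conv}(X)$ and $\mathrm{conv}(X')$ have the same extreme points and the quadratic min-power centre of $X'$ is $w$.
   Context: For a finite collection $Y=\{y_j:j\in J\}$ of points in the plane, its quadratic min-power centre is the unique minimiser of $P(s)=\sum_{j\in J}\|s-y_j\|^2+\max_{j\in J}\|s-y_j\|^2$. The farthest point Voronoi diagram of $X$ partitions the plane into the regions $V(x)=\{s:\|s-x\|=\max_{y\in X}\|s-y\|\}$, $x\in X$; its edges and vertices are the one- and zero-dimensional parts of the boundaries between these regions. In this paper a collection of nodes may contain coincident points (several nodes at the same location, each counted in the sum). *)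

theory Defs
  imports "HOL-Analysis.Analysis" "HOL-Library.Multiset"
begin

text \<open>A collection of nodes (possibly with coincident points) is a multiset of points.\<close>

definition qpower :: "(real^2) multiset \<Rightarrow> real^2 \<Rightarrow> real" where
  "qpower Y s = (\<Sum>y\<in>#Y. (dist s y)^2) + Max ((\<lambda>y. (dist s y)^2) ` set_mset Y)"

definition is_qmin_power_centre :: "(real^2) multiset \<Rightarrow> real^2 \<Rightarrow> bool" where
  "is_qmin_power_centre Y w \<longleftrightarrow>
     (\<forall>s. qpower Y w \<le> qpower Y s) \<and> (\<forall>s. qpower Y s = qpower Y w \<longrightarrow> s = w)"

definition fpv_region :: "(real^2) set \<Rightarrow> real^2 \<Rightarrow> (real^2) set" where
  "fpv_region X x = {s. dist s x = Max ((\<lambda>y. dist s y) ` X)}"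

text \<open>Points lying on a vertex or an edge of the farthest point Voronoi diagram:
  points on the common boundary of two distinct regions.\<close>
definition on_fpvd_skeleton :: "(real^2) set \<Rightarrow> real^2 \<Rightarrow> bool" where
  "on_fpvd_skeleton X w \<longleftrightarrow>
     (\<exists>x\<in>X. \<exists>y\<in>X. x \<noteq> y \<and> w \<in> fpv_region X x \<and> w \<in> fpv_region X y)"

end

theory Submission
  imports Defs
begin

lemma dist_expand:
  fixes s w y :: "real^2"
  shows "dist s y ^2 = dist w y ^2 + 2 * ((s-w) \<bullet> (w-y)) + dist s w ^2"
proof -
  have e: "s - y = (s - w) + (w - y)" by simp
  have "dist s y ^2 = ((s - w) + (w - y)) \<bullet> ((s - w) + (w - y))"
    unfolding dist_norm power2_norm_eq_inner e ..
  also have "\<dots> = (s-w)\<bullet>(s-w) + 2 * ((s-w) \<bullet> (w-y)) + (w-y)\<bullet>(w-y)"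
    unfolding inner_add_left inner_add_right by (simp add: inner_commute)
  also have "\<dots> = dist w y ^2 + 2 * ((s-w) \<bullet> (w-y)) + dist s w ^2"
    by (simp add: dist_norm power2_norm_eq_inner)
  finally show ?thesis .
qed

lemma msum_split:
  fixes f :: "real^2 \<Rightarrow> real"
  assumes "finite X"
  shows "(\<Sum>y\<in>#(mset_set X + replicate_mset m q). f y) = (\<Sum>y\<in>X. f y) + of_nat m * f q"
  using assms by (simp add: sum_unfold_sum_mset)

theorem proposition4:
  fixes X :: "(real^2) set" and w :: "real^2"
  assumes "finite X"
    and "w \<in> interior (convex hull X)"
    and "on_fpvd_skeleton X w"
  shows "\<exists>X' :: (real^2) multiset.
           {p. p extreme_point_of (convex hull X)} =
             {p. p extreme_point_of (convex hull (set_mset X'))}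
           \<and> is_qmin_power_centre X' w"
proof -
  have fin: "finite X" by fact
  have Xne: "X \<noteq> {}" using assms(2) by auto
  obtain r where r: "r > 0" "ball w r \<subseteq> convex hull X"
  proof -
    obtain r where "r > 0" "ball w r \<subseteq> interior (convex hull X)"
      using assms(2) open_interior open_contains_ball by blast
    then show ?thesis using interior_subset that by blast
  qed
  define R where "R = Max (dist w ` X)"
  have "R \<in> dist w ` X" unfolding R_def using fin Xne by (intro Max_in) auto
  then obtain x0 where x0: "x0 \<in> X" "dist w x0 = R" by auto
  have Rge: "\<And>y. y \<in> X \<Longrightarrow> dist w y \<le> R" unfolding R_def using fin by auto
  define K where "K = card X"
  define v where "v = real K *\<^sub>R w - (\<Sum>y\<in>X. y) + w - x0"
  obtain m :: nat where m: "norm v / r < real m" using reals_Archimedean2 by blast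
  have mpos: "m > 0" using m r by (cases "m = 0") (auto simp: divide_less_0_iff)
  define q where "q = w + (1 / real m) *\<^sub>R v"
  have "dist w q = norm v / real m" unfolding q_def dist_norm using mpos by simp
  also have "\<dots> < r" using m mpos r by (simp add: divide_less_eq mult.commute pos_divide_less_eq)
  finally have qhull: "q \<in> convex hull X" using r by auto
  have hcb: "convex hull X \<subseteq> cball w R"
    by (rule hull_minimal) (auto simp: Rge convex_cball)
  have qR: "dist w q \<le> R" using qhull hcb by auto
  define X' where "X' = mset_set X + replicate_mset m q"
  have setX': "set_mset X' = insert q X" unfolding X'_def using fin mpos by auto
  have hulleq: "convex hull (set_mset X') = convex hull X"
    unfolding setX' using qhull by (rule hull_redundant)
  have key: "(\<Sum>y\<in>X. (w - y)) + real m *\<^sub>R (w - q) = x0 - w"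
  proof -
    have "(\<Sum>y\<in>X. (w - y)) = real K *\<^sub>R w - (\<Sum>y\<in>X. y)"
      by (simp add: sum_subtractf K_def scaleR_conv_of_real)
    moreover have "real m *\<^sub>R (w - q) = - v" unfolding q_def using mpos by simp
    ultimately show ?thesis unfolding v_def by simp
  qed
  define P where "P = qpower X'"
  have Pw: "P w = (\<Sum>y\<in>#X'. (dist w y)^2) + (dist w x0)^2"
  proof -
    have "Max ((\<lambda>y. (dist w y)^2) ` set_mset X') = (dist w x0)^2"
    proof (rule Max_eqI)
      show "finite ((\<lambda>y. (dist w y)^2) ` set_mset X')" by simp
      show "(dist w x0)^2 \<in> (\<lambda>y. (dist w y)^2) ` set_mset X'" using setX' x0 by auto
      fix a assume "a \<in> (\<lambda>y. (dist w y)^2) ` set_mset X'"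
      then obtain y where y: "y \<in> insert q X" "a = (dist w y)^2" using setX' by auto
      have "dist w y \<le> dist w x0" using y(1) qR Rge x0 by auto
      then show "a \<le> (dist w x0)^2" using y(2) by (simp add: power_mono)
    qed
    then show ?thesis unfolding P_def qpower_def by simp
  qed
  have Pbound: "P s \<ge> P w + (real K + real m + 1) * (dist s w)^2" for s
  proof -
    have mx: "Max ((\<lambda>y. (dist s y)^2) ` set_mset X') \<ge> (dist s x0)^2"
      using setX' x0 fin by (intro Max_ge) auto
    let ?f = "\<lambda>y. dist w y ^2 + 2 * ((s-w) \<bullet> (w-y)) + dist s w ^2"
    have "(\<Sum>y\<in>#X'. (dist s y)^2) = (\<Sum>y\<in>#X'. ?f y)"
      by (rule arg_cong[where f=sum_mset], rule image_mset_cong, rule dist_expand)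
    also have "\<dots> = (\<Sum>y\<in>X. ?f y) + real m * ?f q"
      unfolding X'_def by (rule msum_split[OF fin])
    also have "\<dots> = ((\<Sum>y\<in>X. dist w y ^2) + real m * dist w q ^2)
        + 2 * ((s - w) \<bullet> ((\<Sum>y\<in>X. (w - y)) + real m *\<^sub>R (w - q)))
        + (real K + real m) * dist s w ^2"
    proof -
      have A: "(\<Sum>y\<in>X. ?f y) = (\<Sum>y\<in>X. dist w y ^2) + 2 * ((s-w) \<bullet> (\<Sum>y\<in>X. w - y)) + real K * dist s w ^2"
        by (simp add: sum.distrib sum_distrib_left inner_sum_right K_def)
      have B: "real m * ?f q = real m * dist w q ^2 + 2 * ((s-w) \<bullet> (real m *\<^sub>R (w - q))) + real m * dist s w ^2"
        by (simp add: inner_scaleR_right algebra_simps)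
      show ?thesis unfolding A B inner_add_right by (simp add: algebra_simps)
    qed
    also have "\<dots> = (\<Sum>y\<in>#X'. (dist w y)^2)
        + 2 * ((s - w) \<bullet> (x0 - w)) + (real K + real m) * dist s w ^2"
      unfolding key X'_def msum_split[OF fin] by simp
    finally have S: "(\<Sum>y\<in>#X'. (dist s y)^2) = (\<Sum>y\<in>#X'. (dist w y)^2)
        + 2 * ((s - w) \<bullet> (x0 - w)) + (real K + real m) * dist s w ^2" .
    have D: "(dist s x0)^2 = dist w x0 ^2 + 2 * ((s-w) \<bullet> (w-x0)) + dist s w ^2"
      by (rule dist_expand)
    have "(s - w) \<bullet> (w - x0) = - ((s - w) \<bullet> (x0 - w))"
      by (metis inner_minus_right minus_diff_eq)
    then have E: "(dist s x0)^2 = dist w x0 ^2 - 2 * ((s-w) \<bullet> (x0-w)) + dist s w ^2"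
      using D by simp
    have "P s = (\<Sum>y\<in>#X'. (dist s y)^2) + Max ((\<lambda>y. (dist s y)^2) ` set_mset X')"
      unfolding P_def qpower_def ..
    then show ?thesis using S E mx Pw by (simp add: algebra_simps)
  qed
  have "is_qmin_power_centre X' w"
    unfolding is_qmin_power_centre_def P_def[symmetric]
  proof (intro conjI allI impI)
    fix s
    have "(real K + real m + 1) * (dist s w)^2 \<ge> 0" by simp
    then show "P w \<le> P s" using Pbound[of s] by linarith
  next
    fix s assume "P s = P w"
    then have "(real K + real m + 1) * (dist s w)^2 \<le> 0" using Pbound[of s] by linarith
    then have "(dist s w)^2 \<le> 0"
      by (smt (verit, best) mult_le_0_iff of_nat_0_le_iff zero_le_power2)
    then show "s = w" by simp
  qed
  then show ?thesis using hulleq by (intro exI[of _ X']) simp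
qed

end
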